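(* For every positive integer $k$, $g_{k,U}=B_U(k)!\,\dfrac{\left(\prod_{j=1}^{k-1}j!\right)^2}{\prod_{j=1}^{2k-1}j!}=B_U(k)!\,2^{k-k^2}\prod_{j=1}^{k-1}\dfrac{1}{(2j-1)!!\,(2j+1)!!}$, $g_{k,O}=B_O(k)!\,2^{B_O(k)+k-1}\prod_{j=1}^{k-1}\dfrac{j!}{(2j)!}=B_O(k)!\,2^{k-1}\prod_{j=1}^{k-1}\dfrac{1}{(2j-1)!!}$, $g_{k,Sp}=B_{Sp}(k)!\,2^{B_{Sp}(k)}\prod_{j=1}^{k}\dfrac{j!}{(2j)!}=B_{Sp}(k)!\prod_{j=1}^{k}\dfrac{1}{(2j-1)!!}$.
   Context: $n!!$ denotes the double factorial. For $\lambda\in\mathbb{C}$ let $B_U(\lambda)=\lambda^2$, $B_O(\lambda)=\tfrac12\lambda(\lambda-1)$, $B_{Sp}(\lambda)=\tfrac12\lambda(\lambda+1)$. Define $G_U(\lambda)=\lim_{N\to\infty}N^{-\lambda^2}\prod_{j=1}^{N}\frac{\Gamma(j)\Gamma(j+2\lambda)}{\Gamma(j+\lambda)^2}$, $G_O(\lambda)=\tfrac12\lim_{N\to\infty}N^{-\lambda(\lambda-1)/2}\,2^{2N\lambda}\prod_{j=1}^{N}\frac{\Gamma(N+j-1)\Gamma(j-\frac12+\lambda)}{\Gamma(N+j-1+\lambda)\Gamma(j-\frac12)}$, $G_{Sp}(\lambda)=\lim_{N\to\infty}N^{-\lambda(\lambda+1)/2}\,2^{2N\lambda}\prod_{j=1}^{N}\frac{\Gamma(N+j+1)\Gamma(j+\frac12+\lambda)}{\Gamma(N+j+1+\lambda)\Gamma(j+\frac12)}$,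 and $g_{\lambda,X}=\Gamma(1+B_X(\lambda))\,G_X(\lambda)$ for $X\in\{U,O,Sp\}$. *)

theory Defs
  imports "HOL-Analysis.Analysis"
begin

fun dfact :: "nat \<Rightarrow> nat" where
  "dfact 0 = 1"
| "dfact (Suc 0) = 1"
| "dfact (Suc (Suc n)) = Suc (Suc n) * dfact n"

definition B_U :: "complex \<Rightarrow> complex" where
  "B_U z = z ^ 2"
definition B_O :: "complex \<Rightarrow> complex" where
  "B_O z = z * (z - 1) / 2"
definition B_Sp :: "complex \<Rightarrow> complex" where
  "B_Sp z = z * (z + 1) / 2"

definition seq_U :: "complex \<Rightarrow> nat \<Rightarrow> complex" where
  "seq_U z N = of_nat N powr (- (z ^ 2)) *
     (\<Prod>j=1..N. Gamma (of_nat j) * Gamma (of_nat j + 2 * z) / (Gamma (of_nat j + z))^2)"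

definition seq_O :: "complex \<Rightarrow> nat \<Rightarrow> complex" where
  "seq_O z N = of_nat N powr (- (z * (z - 1) / 2)) * 2 powr (2 * of_nat N * z) *
     (\<Prod>j=1..N. Gamma (of_nat N + of_nat j - 1) * Gamma (of_nat j - 1/2 + z) /
                 (Gamma (of_nat N + of_nat j - 1 + z) * Gamma (of_nat j - 1/2)))"

definition seq_Sp :: "complex \<Rightarrow> nat \<Rightarrow> complex" where
  "seq_Sp z N = of_nat N powr (- (z * (z + 1) / 2)) * 2 powr (2 * of_nat N * z) *
     (\<Prod>j=1..N. Gamma (of_nat N + of_nat j + 1) * Gamma (of_nat j + 1/2 + z) /
                 (Gamma (of_nat N + of_nat j + 1 + z) * Gamma (of_nat j + 1/2)))"

definition G_U :: "complex \<Rightarrow> complex" where "G_U z = lim (seq_U z)"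
definition G_O :: "complex \<Rightarrow> complex" where "G_O z = 1/2 * lim (seq_O z)"
definition G_Sp :: "complex \<Rightarrow> complex" where "G_Sp z = lim (seq_Sp z)"

definition g_U :: "complex \<Rightarrow> complex" where "g_U z = Gamma (1 + B_U z) * G_U z"
definition g_O :: "complex \<Rightarrow> complex" where "g_O z = Gamma (1 + B_O z) * G_O z"
definition g_Sp :: "complex \<Rightarrow> complex" where "g_Sp z = Gamma (1 + B_Sp z) * G_Sp z"

end

theory Submission
  imports Defs
begin


lemma LP:
  fixes c :: complex
  shows "(\<lambda>N. pochhammer (of_nat N + c) k / of_nat N ^ k) \<longlonglongrightarrow> 1"
proof -
  have ev: "\<forall>\<^sub>F N in sequentially. (\<Prod>i<k. 1 + (c + of_nat i) * inverse (of_nat N)) = pochhammer (of_nat N + c) k / of_nat N ^ k"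
    using eventually_gt_at_top[of 0]
  proof eventually_elim
    case (elim N)
    have "pochhammer (of_nat N + c) k / of_nat N ^ k = (\<Prod>i<k. (of_nat N + c + of_nat i) / of_nat N)"
      by (simp add: pochhammer_prod atLeast0LessThan prod_dividef)
    also have "\<dots> = (\<Prod>i<k. 1 + (c + of_nat i) * inverse (of_nat N))"
      using elim by (intro prod.cong) (auto simp: field_simps)
    finally show ?case by simp
  qed
  have "(\<lambda>N. \<Prod>i<k. 1 + (c + of_nat i) * inverse (of_nat N :: complex)) \<longlonglongrightarrow> (\<Prod>i<k. 1 + (c + of_nat i) * 0)"
    by (intro tendsto_prod tendsto_add tendsto_mult tendsto_const lim_inverse_n)
  then have "(\<lambda>N. \<Prod>i<k. 1 + (c + of_nat i) * inverse (of_nat N :: complex)) \<longlonglongrightarrow> 1" by simp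
  then show ?thesis using ev by (rule Lim_transform_eventually)
qed

lemma LP2:
  fixes c :: complex
  shows "(\<lambda>N. pochhammer (2 * of_nat N + c) k / (2 * of_nat N) ^ k) \<longlonglongrightarrow> 1"
proof -
  have "((\<lambda>N. pochhammer (of_nat N + c) k / of_nat N ^ k) \<circ> (\<lambda>N. 2 * N)) \<longlonglongrightarrow> 1"
    by (rule LIMSEQ_subseq_LIMSEQ[OF LP]) (auto simp: strict_mono_def)
  then show ?thesis by (simp add: o_def)
qed

lemma notnp: "Re z > 0 \<Longrightarrow> z \<notin> \<int>\<^sub>\<le>\<^sub>0"
  by (auto elim!: nonpos_Ints_cases)

lemma GR: "Re z > 0 \<Longrightarrow> Gamma (z + of_nat n) = Gamma z * (\<Prod>i<n. z + of_nat i)"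
  using pochhammer_Gamma[of z n] notnp[of z] Gamma_eq_zero_iff[of z]
  by (auto simp: pochhammer_prod atLeast0LessThan field_simps)

lemma L1m: "(\<Prod>j=1..N. (of_nat a + of_nat j :: complex)) * fact a = fact (a+N)"
proof (induction N)
  case 0 then show ?case by simp
next
  case (Suc N)
  have "(\<Prod>j=1..Suc N. (of_nat a + of_nat j :: complex)) * fact a = ((\<Prod>j=1..N. (of_nat a + of_nat j :: complex)) * fact a) * (of_nat a + of_nat (Suc N))"
    by simp
  also have "\<dots> = fact (a + N) * (of_nat (Suc (a + N)))" using Suc by simp
  also have "\<dots> = fact (a + Suc N)" by (simp add: fact_Suc algebra_simps)
  finally show ?case .
qed

lemma L1: "(\<Prod>j=1..N. (of_nat a + of_nat j :: complex)) = of_nat (fact (a+N)) / of_nat (fact a)"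
  using L1m[where N=N and a=a] by (simp add: eq_divide_eq)

lemma L2m: "(\<Prod>j=1..N. (of_nat j + of_nat i + 1/2 :: complex)) * (fact (N+i) * fact (2*i+1) * 4^N) = 
   fact (2*N+2*i+1) * fact i"
proof (induction N)
  case 0 then show ?case by simp
next
  case (Suc N)
  let ?P = "(\<Prod>j=1..N. (of_nat j + of_nat i + 1/2 :: complex))"
  have s1: "(\<Prod>j=1..Suc N. (of_nat j + of_nat i + 1/2 :: complex)) = ?P * (of_nat (Suc N) + of_nat i + 1/2)" by simp
  have s2: "(fact (Suc N+i) :: complex) = of_nat (Suc (N+i)) * fact (N+i)" by (simp add: fact_Suc)
  have s3: "(4::complex)^Suc N = 4 * 4^N" by simp
  have "(\<Prod>j=1..Suc N. (of_nat j + of_nat i + 1/2 :: complex)) * (fact (Suc N+i) * fact (2*i+1) * 4^Suc N)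
      = (?P * (fact (N+i) * fact (2*i+1) * 4^N)) * ((of_nat (Suc N) + of_nat i + 1/2) * of_nat (Suc (N+i)) * 4)"
    unfolding s1 s2 s3 by (simp only: mult_ac)
  also have "\<dots> = fact (2*N+2*i+1) * fact i * ((of_nat (Suc N) + of_nat i + 1/2) * of_nat (Suc (N+i)) * 4)"
    using Suc by simp
  also have "\<dots> = fact (Suc (Suc (2*N+2*i+1))) * fact i"
    by (simp add: fact_Suc field_simps)
  also have "Suc (Suc (2*N+2*i+1)) = 2 * Suc N + 2 * i + 1" by simp
  finally show ?case .
qed

lemma L2: "(\<Prod>j=1..N. (of_nat j + of_nat i + 1/2 :: complex)) = 
   fact (2*N+2*i+1) * fact i / (fact (N+i) * fact (2*i+1) * 4^N)"
proof -
  have "fact (N+i) * fact (2*i+1) * 4^N \<noteq> (0::complex)" by (simp only: mult_eq_0_iff fact_nonzero power_eq_0_iff) simp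
  then show ?thesis using L2m[where N=N and i=i] by (simp add: eq_divide_eq)
qed

lemma L3m: "(\<Prod>j=1..N. (of_nat j + of_nat i - 1/2 :: complex)) * (fact (N+i) * fact (2*i) * 4^N) = 
   fact (2*N+2*i) * fact i"
proof (induction N)
  case 0 then show ?case by simp
next
  case (Suc N)
  let ?P = "(\<Prod>j=1..N. (of_nat j + of_nat i - 1/2 :: complex))"
  have s1: "(\<Prod>j=1..Suc N. (of_nat j + of_nat i - 1/2 :: complex)) = ?P * (of_nat (Suc N) + of_nat i - 1/2)" by simp
  have s2: "(fact (Suc N+i) :: complex) = of_nat (Suc (N+i)) * fact (N+i)" by (simp add: fact_Suc)
  have s3: "(4::complex)^Suc N = 4 * 4^N" by simp
  have "(\<Prod>j=1..Suc N. (of_nat j + of_nat i - 1/2 :: complex)) * (fact (Suc N+i) * fact (2*i) * 4^Suc N)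
      = (?P * (fact (N+i) * fact (2*i) * 4^N)) * ((of_nat (Suc N) + of_nat i - 1/2) * of_nat (Suc (N+i)) * 4)"
    unfolding s1 s2 s3 by (simp only: mult_ac)
  also have "\<dots> = fact (2*N+2*i) * fact i * ((of_nat (Suc N) + of_nat i - 1/2) * of_nat (Suc (N+i)) * 4)"
    using Suc by simp
  also have "\<dots> = fact (Suc (Suc (2*N+2*i))) * fact i"
    by (simp add: fact_Suc field_simps)
  also have "Suc (Suc (2*N+2*i)) = 2 * Suc N + 2 * i" by simp
  finally show ?case .
qed

lemma L3: "(\<Prod>j=1..N. (of_nat j + of_nat i - 1/2 :: complex)) = 
   fact (2*N+2*i) * fact i / (fact (N+i) * fact (2*i) * 4^N)"
proof -
  have "fact (N+i) * fact (2*i) * 4^N \<noteq> (0::complex)" by simp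
  then show ?thesis using L3m[where N=N and i=i] by (simp add: eq_divide_eq)
qed



lemma FP: "(fact (a + m) :: complex) = fact a * pochhammer (of_nat a + 1) m"
  by (simp add: pochhammer_fact pochhammer_product' add_ac)

lemma powr_negnat: "N > 0 \<Longrightarrow> (of_nat N :: complex) powr (- of_nat m) = inverse (of_nat N ^ m)"
  by (simp add: powr_minus powr_nat')

lemma termU:
  assumes "j \<ge> 1"
  shows "Gamma (of_nat j) * Gamma (of_nat j + 2 * of_nat k) / (Gamma (of_nat j + of_nat k))^2
       = (\<Prod>i<k. (of_nat (k+i) + of_nat j) / (of_nat i + of_nat j :: complex))"
proof -
  let ?z = "of_nat j :: complex"
  have g1: "Gamma (?z + of_nat k) = Gamma ?z * (\<Prod>i<k. ?z + of_nat i)"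
    using assms by (intro GR) simp
  have g2: "Gamma ((?z + of_nat k) + of_nat k) = Gamma (?z + of_nat k) * (\<Prod>i<k. (?z + of_nat k) + of_nat i)"
    using assms by (intro GR) simp
  have e: "?z + 2 * of_nat k = (?z + of_nat k) + of_nat k" by simp
  have nz1: "Gamma ?z \<noteq> 0" using assms by (simp add: Gamma_eq_zero_iff notnp)
  have nz2: "(\<Prod>i<k. ?z + of_nat i) \<noteq> 0" using assms
  proof -
    have "\<And>i. ?z + of_nat i \<noteq> 0" using assms by (metis add_is_0 of_nat_add of_nat_eq_0_iff not_one_le_zero)
    then show ?thesis by (simp add: prod_zero_iff)
  qed
  have alg: "\<And>a b c :: complex. a \<noteq> 0 \<Longrightarrow> b \<noteq> 0 \<Longrightarrow> a * (a * b * c) / (a * b)^2 = c / b"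
    by (simp add: power2_eq_square)
  have "Gamma ?z * Gamma (?z + 2 * of_nat k) / (Gamma (?z + of_nat k))^2
     = (\<Prod>i<k. (?z + of_nat k) + of_nat i) / (\<Prod>i<k. ?z + of_nat i)"
    unfolding e g2 g1 using nz1 nz2 by (rule alg)
  also have "\<dots> = (\<Prod>i<k. ((?z + of_nat k) + of_nat i) / (?z + of_nat i))"
    by (rule prod_dividef[symmetric])
  also have "\<dots> = (\<Prod>i<k. (of_nat (k+i) + of_nat j) / (of_nat i + of_nat j :: complex))"
    by (intro prod.cong refl) (simp add: add_ac)
  finally show ?thesis .
qed

lemma seqU_eq:
  assumes "N \<ge> 1"
  shows "seq_U (of_nat k) N = (\<Prod>i<k. fact i / fact (k+i) * (pochhammer (of_nat N + (of_nat i + 1)) k / of_nat N ^ k))"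
proof -
  have p: "of_nat N powr (- ((of_nat k :: complex) ^ 2)) = inverse (of_nat N ^ k) ^ k"
    using powr_negnat[of N "k^2"] assms by (simp add: power2_eq_square power_mult power_inverse)
  have "(\<Prod>j=1..N. Gamma (of_nat j :: complex) * Gamma (of_nat j + 2 * of_nat k) / (Gamma (of_nat j + of_nat k))^2)
      = (\<Prod>j=1..N. \<Prod>i<k. (of_nat (k+i) + of_nat j) / (of_nat i + of_nat j :: complex))"
    by (intro prod.cong refl termU) simp
  also have "\<dots> = (\<Prod>i<k. \<Prod>j=1..N. (of_nat (k+i) + of_nat j) / (of_nat i + of_nat j :: complex))"
    by (rule prod.swap)
  also have "\<dots> = (\<Prod>i<k. (\<Prod>j=1..N. of_nat (k+i) + of_nat j) / (\<Prod>j=1..N. of_nat i + of_nat j :: complex))"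
    by (simp only: prod_dividef)
  also have "\<dots> = (\<Prod>i<k. (fact (k+i+N) / fact (k+i)) / (fact (i+N) / fact i))"
    by (simp only: L1 of_nat_fact)
  finally have P: "(\<Prod>j=1..N. Gamma (of_nat j :: complex) * Gamma (of_nat j + 2 * of_nat k) / (Gamma (of_nat j + of_nat k))^2)
      = (\<Prod>i<k. (fact (k+i+N) / fact (k+i)) / (fact (i+N) / fact i))" .
  have "seq_U (of_nat k) N = (\<Prod>i<k. inverse (of_nat N ^ k) * ((fact (k+i+N) / fact (k+i)) / (fact (i+N) / fact i)))"
    unfolding seq_U_def p P by (simp only: prod.distrib prod_constant card_lessThan)
  also have "\<dots> = (\<Prod>i<k. fact i / fact (k+i) * (pochhammer (of_nat N + (of_nat i + 1)) k / of_nat N ^ k))"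
  proof (intro prod.cong refl)
    fix i
    have "(fact (k+i+N) :: complex) = fact (i+N) * pochhammer (of_nat N + (of_nat i + 1)) k"
      using FP[of "i+N" k] by (simp add: add_ac)
    then show "inverse (of_nat N ^ k) * ((fact (k+i+N) / fact (k+i)) / (fact (i+N) / fact i)) = 
       fact i / fact (k+i) * (pochhammer (of_nat N + (of_nat i + 1)) k / of_nat N ^ k :: complex)"
      by (simp add: field_simps)
  qed
  finally show ?thesis .
qed



lemma sum1: "2 * (\<Sum>i<k. i+1) = k*(k+1::nat)"
  by (induction k) (auto simp: algebra_simps)

lemma sum0: "2 * (\<Sum>i<k. i) = k*(k-1::nat)"
  by (induction k) (auto simp: algebra_simps)

lemma exp1: "(of_nat k * (of_nat k + 1) / 2 :: complex) = of_nat (\<Sum>i<k. i+1)"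
proof -
  have "(of_nat (2 * (\<Sum>i<k. i+1)) :: complex) = of_nat (k*(k+1))" by (simp only: sum1)
  then show ?thesis by (simp del: of_nat_sum add: field_simps)
qed

lemma exp0: "(of_nat k * (of_nat k - 1) / 2 :: complex) = of_nat (\<Sum>i<k. i)"
proof -
  have "(of_nat (2 * (\<Sum>i<k. i)) :: complex) = of_nat (k*(k-1))" by (simp only: sum0)
  then show ?thesis by (cases k) (simp_all del: of_nat_sum add: field_simps)
qed

lemma pow4: "(2::complex) powr (2 * of_nat N * of_nat k) = (\<Prod>i<k. 4 ^ N)"
proof -
  have "(2::complex) powr (2 * of_nat N * of_nat k) = 2 powr (of_nat (2*N*k))" by simp
  also have "\<dots> = 2 ^ (2*N*k)" by (rule powr_nat') simp
  also have "\<dots> = (4 ^ N) ^ k" by (simp add: power_mult)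
  finally show ?thesis by simp
qed

lemma termSp:
  "Gamma (of_nat N + of_nat j + 1) * Gamma (of_nat j + 1/2 + of_nat k) /
      (Gamma (of_nat N + of_nat j + 1 + of_nat k) * Gamma (of_nat j + 1/2))
   = (\<Prod>i<k. (of_nat j + of_nat i + 1/2) / (of_nat (N+1+i) + of_nat j :: complex))"
proof -
  let ?w = "of_nat N + of_nat j + 1 :: complex"
  let ?v = "of_nat j + 1/2 :: complex"
  have g1: "Gamma (?w + of_nat k) = Gamma ?w * (\<Prod>i<k. ?w + of_nat i)"
    by (intro GR) simp
  have g2: "Gamma (?v + of_nat k) = Gamma ?v * (\<Prod>i<k. ?v + of_nat i)"
    by (intro GR) simp
  have nz1: "Gamma ?w \<noteq> 0" by (simp add: Gamma_eq_zero_iff notnp)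
  have nz2: "Gamma ?v \<noteq> 0" by (simp add: Gamma_eq_zero_iff notnp)
  have nz3: "(\<Prod>i<k. ?w + of_nat i) \<noteq> 0"
  proof -
    have "\<And>i. ?w + of_nat i \<noteq> 0"
    proof
      fix i assume "?w + of_nat i = 0"
      then have "Re (?w + of_nat i) = 0" by simp
      then show False by simp
    qed
    then show ?thesis by (simp add: prod_zero_iff)
  qed
  have "Gamma ?w * Gamma (?v + of_nat k) / (Gamma (?w + of_nat k) * Gamma ?v)
     = (\<Prod>i<k. ?v + of_nat i) / (\<Prod>i<k. ?w + of_nat i)"
    unfolding g1 g2 using nz1 nz2 nz3 by (simp add: field_simps)
  also have "\<dots> = (\<Prod>i<k. (of_nat j + of_nat i + 1/2) / (of_nat (N+1+i) + of_nat j :: complex))"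
    by (simp add: prod_dividef add_ac)
  finally show ?thesis by simp
qed

lemma termO:
  assumes "N \<ge> 1" "j \<ge> 1"
  shows "Gamma (of_nat N + of_nat j - 1) * Gamma (of_nat j - 1/2 + of_nat k) /
      (Gamma (of_nat N + of_nat j - 1 + of_nat k) * Gamma (of_nat j - 1/2))
   = (\<Prod>i<k. (of_nat j + of_nat i - 1/2) / (of_nat (N-1+i) + of_nat j :: complex))"
proof -
  let ?w = "of_nat N + of_nat j - 1 :: complex"
  let ?v = "of_nat j - 1/2 :: complex"
  have rw: "Re ?w \<ge> 1" using assms by simp
  have rv: "Re ?v > 0" using assms by simp
  have g1: "Gamma (?w + of_nat k) = Gamma ?w * (\<Prod>i<k. ?w + of_nat i)"
    using rw by (intro GR) simp
  have g2: "Gamma (?v + of_nat k) = Gamma ?v * (\<Prod>i<k. ?v + of_nat i)"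
    using rv by (intro GR) simp
  have nz1: "Gamma ?w \<noteq> 0" using rw by (simp add: Gamma_eq_zero_iff notnp)
  have nz2: "Gamma ?v \<noteq> 0" using rv by (simp add: Gamma_eq_zero_iff notnp)
  have nz3: "(\<Prod>i<k. ?w + of_nat i) \<noteq> 0"
  proof -
    have "\<And>i. ?w + of_nat i \<noteq> 0"
    proof
      fix i assume "?w + of_nat i = 0"
      then have "Re (?w + of_nat i) = 0" by simp
      then show False using rw by simp
    qed
    then show ?thesis by (simp add: prod_zero_iff)
  qed
  have "Gamma ?w * Gamma (?v + of_nat k) / (Gamma (?w + of_nat k) * Gamma ?v)
     = (\<Prod>i<k. ?v + of_nat i) / (\<Prod>i<k. ?w + of_nat i)"
    unfolding g1 g2 using nz1 nz2 nz3 by (simp add: field_simps)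
  also have "\<dots> = (\<Prod>i<k. (?v + of_nat i) / (?w + of_nat i))" by (simp only: prod_dividef)
  also have "\<dots> = (\<Prod>i<k. (of_nat j + of_nat i - 1/2) / (of_nat (N-1+i) + of_nat j :: complex))"
    using assms by (intro prod.cong refl) (simp add: of_nat_diff algebra_simps)
  finally show ?thesis by simp
qed



lemma powN: "N \<ge> 1 \<Longrightarrow> (of_nat N :: complex) powr (- of_nat (\<Sum>i<k. f i)) = (\<Prod>i<k. inverse (of_nat N ^ f i))"
  using powr_negnat[of N "\<Sum>i<k. f i"] prod_inversef[of "\<lambda>i. (of_nat N :: complex) ^ f i" "{..<k}"]
  by (simp add: power_sum o_def)

lemma algSp:
  fixes n q B C D E P1 P2 :: complex
  assumes "n \<noteq> 0" "q \<noteq> 0" "B \<noteq> 0" "C \<noteq> 0" "D \<noteq> 0"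
  shows "inverse (n^(i+1)) * q * ((D * P2 * E / (B * C * q)) / (D / (B * P1))) = (E / C * 2^i) * (P1 / n^1) * (P2 / (2*n)^i)"
  using assms by (simp add: field_simps power_mult_distrib)

lemma seqSp_eq:
  assumes "N \<ge> 1"
  shows "seq_Sp (of_nat k) N = (\<Prod>i<k. (fact i / fact (2*i+1) * 2^i) *
     (pochhammer (of_nat N + (of_nat i + 1)) 1 / of_nat N ^ 1) *
     (pochhammer (2 * of_nat N + (of_nat i + 2)) i / (2 * of_nat N) ^ i))"
proof -
  have p1: "of_nat N powr (- (of_nat k * (of_nat k + 1) / 2)) = (\<Prod>i<k. inverse (of_nat N ^ (i+1) :: complex))"
    unfolding exp1 using powN[OF assms, where k=k and f="\<lambda>i. i+1"] by simp
  have "(\<Prod>j=1..N. Gamma (of_nat N + of_nat j + 1) * Gamma (of_nat j + 1/2 + of_nat k) /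
      (Gamma (of_nat N + of_nat j + 1 + of_nat k) * Gamma (of_nat j + 1/2 :: complex)))
    = (\<Prod>j=1..N. \<Prod>i<k. (of_nat j + of_nat i + 1/2) / (of_nat (N+1+i) + of_nat j :: complex))"
    by (intro prod.cong refl termSp)
  also have "\<dots> = (\<Prod>i<k. \<Prod>j=1..N. (of_nat j + of_nat i + 1/2) / (of_nat (N+1+i) + of_nat j :: complex))"
    by (rule prod.swap)
  also have "\<dots> = (\<Prod>i<k. (\<Prod>j=1..N. of_nat j + of_nat i + 1/2) / (\<Prod>j=1..N. of_nat (N+1+i) + of_nat j :: complex))"
    by (simp only: prod_dividef)
  also have "\<dots> = (\<Prod>i<k. (fact (2*N+2*i+1) * fact i / (fact (N+i) * fact (2*i+1) * 4^N)) / (fact (N+1+i+N) / fact (N+1+i)))"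
    by (simp only: L1 L2 of_nat_fact)
  finally have P: "(\<Prod>j=1..N. Gamma (of_nat N + of_nat j + 1) * Gamma (of_nat j + 1/2 + of_nat k) /
      (Gamma (of_nat N + of_nat j + 1 + of_nat k) * Gamma (of_nat j + 1/2 :: complex)))
    = (\<Prod>i<k. (fact (2*N+2*i+1) * fact i / (fact (N+i) * fact (2*i+1) * 4^N)) / (fact (N+1+i+N) / fact (N+1+i)))" .
  have "seq_Sp (of_nat k) N = (\<Prod>i<k. inverse (of_nat N ^ (i+1)) * 4^N * 
      ((fact (2*N+2*i+1) * fact i / (fact (N+i) * fact (2*i+1) * 4^N)) / (fact (N+1+i+N) / fact (N+1+i))))"
    unfolding seq_Sp_def p1 P pow4 by (simp only: prod.distrib)
  also have "\<dots> = (\<Prod>i<k. (fact i / fact (2*i+1) * 2^i) *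
     (pochhammer (of_nat N + (of_nat i + 1)) 1 / of_nat N ^ 1) *
     (pochhammer (2 * of_nat N + (of_nat i + 2)) i / (2 * of_nat N) ^ i))"
  proof (intro prod.cong refl)
    fix i
    have f1: "(fact (N+1+i) :: complex) = fact (N+i) * pochhammer (of_nat N + (of_nat i + 1)) 1"
    proof -
      have e1: "N+1+i = N+i+1" by simp
      have e2: "of_nat (N+i) + 1 = (of_nat N + (of_nat i + 1) :: complex)" by simp
      show ?thesis unfolding e1 using FP[of "N+i" 1] unfolding e2 .
    qed
    have f2: "(fact (2*N+2*i+1) :: complex) = fact (N+1+i+N) * pochhammer (2 * of_nat N + (of_nat i + 2)) i"
    proof -
      have e1: "2*N+2*i+1 = N+1+i+N+i" by simp
      have e2: "of_nat (N+1+i+N) + 1 = (2 * of_nat N + (of_nat i + 2) :: complex)" by simp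
      show ?thesis unfolding e1 using FP[of "N+1+i+N" i] unfolding e2 .
    qed
    show "inverse (of_nat N ^ (i+1)) * 4^N * 
      ((fact (2*N+2*i+1) * fact i / (fact (N+i) * fact (2*i+1) * 4^N)) / (fact (N+1+i+N) / fact (N+1+i))) =
     (fact i / fact (2*i+1) * 2^i) *
     (pochhammer (of_nat N + (of_nat i + 1)) 1 / of_nat N ^ 1) *
     (pochhammer (2 * of_nat N + (of_nat i + 2)) i / (2 * of_nat N) ^ i :: complex)"
      unfolding f1 f2 using assms by (intro algSp) (simp_all del: fact_Suc)
  qed
  finally show ?thesis .
qed



lemma algO:
  fixes n q G C D E P1 P2 :: complex
  assumes "n \<noteq> 0" "q \<noteq> 0" "G \<noteq> 0" "C \<noteq> 0" "D \<noteq> 0" "P1 \<noteq> 0"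
  shows "inverse (n^i) * q * ((D * P2 * E / (G * P1 * C * q)) / (D / G)) = (E / C * 2^(i+1)) * (P2 / (2*n)^(i+1)) / (P1 / n^1)"
  using assms by (simp add: field_simps power_mult_distrib)

lemma seqO_eq:
  assumes "N \<ge> 1"
  shows "seq_O (of_nat k) N = (\<Prod>i<k. (fact i / fact (2*i) * 2^(i+1)) *
     (pochhammer (2 * of_nat N + of_nat i) (i+1) / (2 * of_nat N) ^ (i+1)) /
     (pochhammer (of_nat N + of_nat i) 1 / of_nat N ^ 1))"
proof -
  have p1: "of_nat N powr (- (of_nat k * (of_nat k - 1) / 2)) = (\<Prod>i<k. inverse (of_nat N ^ i :: complex))"
    unfolding exp0 using powN[OF assms, where k=k and f="\<lambda>i. i"] by simp
  have "(\<Prod>j=1..N. Gamma (of_nat N + of_nat j - 1) * Gamma (of_nat j - 1/2 + of_nat k) /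
      (Gamma (of_nat N + of_nat j - 1 + of_nat k) * Gamma (of_nat j - 1/2 :: complex)))
    = (\<Prod>j=1..N. \<Prod>i<k. (of_nat j + of_nat i - 1/2) / (of_nat (N-1+i) + of_nat j :: complex))"
    using assms by (intro prod.cong refl termO) auto
  also have "\<dots> = (\<Prod>i<k. \<Prod>j=1..N. (of_nat j + of_nat i - 1/2) / (of_nat (N-1+i) + of_nat j :: complex))"
    by (rule prod.swap)
  also have "\<dots> = (\<Prod>i<k. (\<Prod>j=1..N. of_nat j + of_nat i - 1/2) / (\<Prod>j=1..N. of_nat (N-1+i) + of_nat j :: complex))"
    by (simp only: prod_dividef)
  also have "\<dots> = (\<Prod>i<k. (fact (2*N+2*i) * fact i / (fact (N+i) * fact (2*i) * 4^N)) / (fact (N-1+i+N) / fact (N-1+i)))"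
    by (simp only: L1 L3 of_nat_fact)
  finally have P: "(\<Prod>j=1..N. Gamma (of_nat N + of_nat j - 1) * Gamma (of_nat j - 1/2 + of_nat k) /
      (Gamma (of_nat N + of_nat j - 1 + of_nat k) * Gamma (of_nat j - 1/2 :: complex)))
    = (\<Prod>i<k. (fact (2*N+2*i) * fact i / (fact (N+i) * fact (2*i) * 4^N)) / (fact (N-1+i+N) / fact (N-1+i)))" .
  have "seq_O (of_nat k) N = (\<Prod>i<k. inverse (of_nat N ^ i) * 4^N * 
      ((fact (2*N+2*i) * fact i / (fact (N+i) * fact (2*i) * 4^N)) / (fact (N-1+i+N) / fact (N-1+i))))"
    unfolding seq_O_def p1 P pow4 by (simp only: prod.distrib)
  also have "\<dots> = (\<Prod>i<k. (fact i / fact (2*i) * 2^(i+1)) *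
     (pochhammer (2 * of_nat N + of_nat i) (i+1) / (2 * of_nat N) ^ (i+1)) /
     (pochhammer (of_nat N + of_nat i) 1 / of_nat N ^ 1))"
  proof (intro prod.cong refl)
    fix i
    have e1: "N-1+i+1 = N+i" "N-1+i+N+(i+1) = 2*N+2*i" using assms by simp_all
    have e2: "(of_nat (N-1+i) + 1 :: complex) = of_nat N + of_nat i"
      "(of_nat (N-1+i+N) + 1 :: complex) = 2 * of_nat N + of_nat i"
    proof -
      have "(of_nat (N-1+i) + 1 :: complex) = of_nat (N-1+i+1)" by (simp only: of_nat_add of_nat_1)
      also have "\<dots> = of_nat N + of_nat i" by (simp only: e1 of_nat_add)
      finally show "(of_nat (N-1+i) + 1 :: complex) = of_nat N + of_nat i" .
      have "N-1+i+N+1 = N + N + i" using assms by simp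
      then have "(of_nat (N-1+i+N) + 1 :: complex) = of_nat (N + N + i)" by (metis of_nat_add of_nat_1)
      also have "\<dots> = 2 * of_nat N + of_nat i" by (simp only: of_nat_add mult_2)
      finally show "(of_nat (N-1+i+N) + 1 :: complex) = 2 * of_nat N + of_nat i" .
    qed
    have f1: "(fact (N+i) :: complex) = fact (N-1+i) * pochhammer (of_nat N + of_nat i) 1"
      using FP[of "N-1+i" 1] unfolding e1 e2 .
    have f2: "(fact (2*N+2*i) :: complex) = fact (N-1+i+N) * pochhammer (2 * of_nat N + of_nat i) (i+1)"
      using FP[of "N-1+i+N" "i+1"] unfolding e1 e2 .
    have pz: "pochhammer (of_nat N + of_nat i) 1 \<noteq> (0::complex)" using assms
    proof -
      have "pochhammer (of_nat N + of_nat i) 1 = (of_nat (N+i) :: complex)" by simp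
      moreover have "(of_nat (N+i) :: complex) \<noteq> 0" using assms by (simp only: of_nat_eq_0_iff)
      ultimately show ?thesis by simp
    qed
    show "inverse (of_nat N ^ i) * 4^N * 
      ((fact (2*N+2*i) * fact i / (fact (N+i) * fact (2*i) * 4^N)) / (fact (N-1+i+N) / fact (N-1+i))) =
     (fact i / fact (2*i) * 2^(i+1)) *
     (pochhammer (2 * of_nat N + of_nat i) (i+1) / (2 * of_nat N) ^ (i+1)) /
     (pochhammer (of_nat N + of_nat i) 1 / of_nat N ^ 1 :: complex)"
      unfolding f1 f2 using assms pz by (intro algO) (simp_all del: fact_Suc)
  qed
  finally show ?thesis .
qed



lemma D2: "fact (2*j+1) = 2^j * fact j * dfact (2*j+1)"
proof (induction j)
  case 0 then show ?case by simp
next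
  case (Suc j)
  have e: "2 * Suc j + 1 = Suc (Suc (2*j+1))" by simp
  show ?case unfolding e using Suc by (simp add: algebra_simps)
qed

lemma D1: "fact (2*j) = 2^j * fact j * dfact (2*j-1)"
proof (cases j)
  case 0 then show ?thesis by simp
next
  case (Suc m)
  have e: "2 * j = Suc (2*m+1)" "2*j - 1 = 2*m+1" using Suc by simp_all
  show ?thesis unfolding e using D2[of m] by (simp add: Suc algebra_simps)
qed

lemma prod_shift1: fixes k :: nat shows "k > 0 \<Longrightarrow> f 0 = 1 \<Longrightarrow> prod f {1..k-1} = (\<Prod>j<k. f j)"
proof -
  assume k: "k > 0" and f0: "f 0 = 1"
  then obtain m where m: "k = Suc m" by (cases k) auto
  have "prod f {1..k-1} = prod f {Suc 0..m}" using m by simp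
  also have "\<dots> = (\<Prod>i<m. f (Suc i))" by (rule prod.atLeast1_atMost_eq)
  also have "\<dots> = (\<Prod>j<k. f j)" unfolding m prod.lessThan_Suc_shift f0 by simp
  finally show ?thesis .
qed

lemma Pd: "k > 0 \<Longrightarrow> (\<Prod>j=1..k-1. 1 / of_nat (dfact (2*j-1)) :: complex) = (\<Prod>j<k. 1 / of_nat (dfact (2*j-1)))"
  by (rule prod_shift1) simp_all

lemma D1c: "(fact j / fact (2*j) * 2^j :: complex) = 1 / of_nat (dfact (2*j-1))"
proof -
  have "(fact (2*j) :: complex) = 2^j * fact j * of_nat (dfact (2*j-1))"
    by (metis D1 of_nat_fact of_nat_mult of_nat_numeral of_nat_power)
  then show ?thesis by (simp add: field_simps)
qed

lemma D2c: "(fact j / fact (2*j+1) * 2^j :: complex) = 1 / of_nat (dfact (2*j+1))"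
proof -
  have "(fact (2*j+1) :: complex) = 2^j * fact j * of_nat (dfact (2*j+1))"
    by (metis D2 of_nat_fact of_nat_mult of_nat_numeral of_nat_power)
  then show ?thesis by (simp add: field_simps)
qed

lemma CS2: "(\<Prod>i<k. (fact i / fact (2*i+1) * 2^i :: complex)) = (\<Prod>j=1..k. 1 / of_nat (dfact (2*j-1)))"
proof -
  have "(\<Prod>j=1..k. 1 / of_nat (dfact (2*j-1)) :: complex) = (\<Prod>j=Suc 0..k. 1 / of_nat (dfact (2*j-1)))" by simp
  also have "\<dots> = (\<Prod>i<k. 1 / of_nat (dfact (2*Suc i-1)))" by (rule prod.atLeast1_atMost_eq)
  also have "\<dots> = (\<Prod>i<k. (fact i / fact (2*i+1) * 2^i :: complex))"
    by (intro prod.cong refl) (simp only: D2c, simp)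
  finally show ?thesis by simp
qed

lemma sum1': "(\<Sum>i<k. i+1) = k*(k+1) div (2::nat)"
proof -
  have "2 * (\<Sum>i<k. i+1) = k*(k+1::nat)" by (induction k) (auto simp: algebra_simps)
  then show ?thesis by simp
qed

lemma sum0': "(\<Sum>i<k. i) = k*(k-1) div (2::nat)"
proof -
  have "2 * (\<Sum>i<k. i) = k*(k-1::nat)" by (induction k) (auto simp: algebra_simps)
  then show ?thesis by simp
qed

lemma CS1: "(\<Prod>i<k. (fact i / fact (2*i+1) * 2^i :: complex)) = 
   2 ^ (k * (k + 1) div 2) * (\<Prod>j=1..k. of_nat (fact j) / of_nat (fact (2*j)))"
proof -
  have "(2::complex) ^ (k * (k + 1) div 2) = (\<Prod>i<k. 2 ^ (i+1))"
    unfolding sum1'[symmetric] by (rule power_sum)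
  then have "2 ^ (k * (k + 1) div 2) * (\<Prod>j=1..k. of_nat (fact j) / of_nat (fact (2*j)))
     = (\<Prod>i<k. fact (Suc i) / fact (2 * Suc i) * 2 ^ (Suc i) :: complex)"
    by (simp add: prod.atLeast1_atMost_eq prod.distrib[symmetric] mult_ac)
  also have "\<dots> = (\<Prod>i<k. (fact i / fact (2*i+1) * 2^i :: complex))"
    by (intro prod.cong refl) (simp only: D1c D2c, simp)
  finally show ?thesis by simp
qed

lemma CO2: "k > 0 \<Longrightarrow> 1/2 * (\<Prod>i<k. (fact i / fact (2*i) * 2^(i+1) :: complex)) = 
   2 ^ (k - 1) * (\<Prod>j=1..k-1. 1 / of_nat (dfact (2*j-1)))"
proof -
  assume k: "k > 0"
  have "(\<Prod>i<k. (fact i / fact (2*i) * 2^(i+1) :: complex)) = (\<Prod>i<k. 2 * (1 / of_nat (dfact (2*i-1))))"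
    by (intro prod.cong refl) (simp only: D1c[symmetric], simp)
  also have "\<dots> = (\<Prod>i<k. 2) * (\<Prod>i<k. 1 / of_nat (dfact (2*i-1)) :: complex)"
    by (rule prod.distrib)
  also have "\<dots> = 2^k * (\<Prod>j=1..k-1. 1 / of_nat (dfact (2*j-1)))"
    using k by (simp only: prod_constant card_lessThan Pd)
  finally show ?thesis using k by (cases k) simp_all
qed

lemma CO1: "k > 0 \<Longrightarrow> 2 ^ (k * (k - 1) div 2 + k - 1) * (\<Prod>j=1..k-1. of_nat (fact j) / of_nat (fact (2*j)) :: complex) = 
   2 ^ (k - 1) * (\<Prod>j=1..k-1. 1 / of_nat (dfact (2*j-1)))"
proof -
  assume k: "k > 0"
  have "(2::complex) ^ (k * (k - 1) div 2) = (\<Prod>i<k. 2 ^ i)"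
    unfolding sum0'[symmetric] by (rule power_sum)
  have "2 ^ (k * (k - 1) div 2 + k - 1) * (\<Prod>j=1..k-1. of_nat (fact j) / of_nat (fact (2*j)) :: complex)
     = 2 ^ (k-1) * (2 ^ (k * (k - 1) div 2) * (\<Prod>j<k. fact j / fact (2*j)))"
  proof -
    have e: "k * (k - 1) div 2 + k - 1 = (k-1) + k * (k - 1) div 2" using k by simp
    have "(\<Prod>j=1..k-1. of_nat (fact j) / of_nat (fact (2*j)) :: complex) = (\<Prod>j<k. fact j / fact (2*j))"
      using k by (subst prod_shift1) simp_all
    then show ?thesis unfolding e power_add by simp
  qed
  also have "\<dots> = 2 ^ (k-1) * ((\<Prod>j<k. 2^j) * (\<Prod>j<k. fact j / fact (2*j)))"
    using \<open>(2::complex) ^ (k * (k - 1) div 2) = _\<close> by (simp only:)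
  also have "\<dots> = 2 ^ (k-1) * (\<Prod>j<k. 2^j * (fact j / fact (2*j)))"
    by (simp only: prod.distrib)
  also have "\<dots> = 2 ^ (k-1) * (\<Prod>j<k. fact j / fact (2*j) * 2^j)"
    by (simp only: mult.commute)
  also have "\<dots> = 2 ^ (k - 1) * (\<Prod>j=1..k-1. 1 / of_nat (dfact (2*j-1)))"
    using k by (simp only: D1c Pd)
  finally show ?thesis .
qed



lemma prod_lessThan_add: fixes k m :: nat shows "(\<Prod>j<k+m. f j) = (\<Prod>j<k. f j) * (\<Prod>i<m. f (k+i))"
  by (induction m) (simp_all add: mult.assoc)

lemma CU1: "k > 0 \<Longrightarrow> (\<Prod>i<k. fact i / fact (k+i) :: complex) =
   (\<Prod>j=1..k-1. of_nat (fact j))^2 / (\<Prod>j=1..2*k-1. of_nat (fact j))"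
proof -
  assume k: "k > 0"
  have a: "(\<Prod>j=1..k-1. of_nat (fact j) :: complex) = (\<Prod>j<k. fact j)"
    using k by (subst prod_shift1) simp_all
  have b: "(\<Prod>j=1..2*k-1. of_nat (fact j) :: complex) = (\<Prod>j<k+k. fact j)"
    using k by (subst prod_shift1) (simp_all add: mult_2)
  have nz: "(\<Prod>j<k. fact j :: complex) \<noteq> 0" by (simp add: prod_zero_iff)
  show ?thesis unfolding a b prod_lessThan_add prod_dividef using nz
    by (simp add: power2_eq_square)
qed

definition FU :: "nat \<Rightarrow> complex" where "FU k = (\<Prod>i<k. fact i / fact (k+i))"

lemma algFU: fixes A B fk f2k f2k1 :: complex
  assumes "B \<noteq> 0" "fk \<noteq> 0" "f2k \<noteq> 0" "f2k1 \<noteq> 0"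
  shows "(A * fk) / ((B * f2k / fk) * f2k1) = A / B * (fk / f2k) * (fk / f2k1)"
  using assms by (simp add: field_simps)

lemma FU_Suc: "FU (Suc k) = FU k * (fact k / fact (2*k)) * (fact k / fact (2*k+1))"
proof -
  have s1: "(\<Prod>i<Suc k. fact (k+i) :: complex) = (\<Prod>i<k. fact (k+i)) * fact (2*k)"
    by (simp only: prod.lessThan_Suc mult_2)
  have s2: "(\<Prod>i<Suc k. fact (k+i) :: complex) = fact k * (\<Prod>i<k. fact (Suc k+i))"
    by (simp only: prod.lessThan_Suc_shift add_0_right add_Suc_right add_Suc)
  have ek: "Suc k + k = 2*k+1" by simp
  have nzk: "(fact k :: complex) \<noteq> 0" by (rule fact_nonzero)
  have e: "(\<Prod>i<k. fact (Suc k+i) :: complex) = (\<Prod>i<k. fact (k+i)) * fact (2*k) / fact k"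
    using s1 s2 nzk by (metis nonzero_mult_div_cancel_left)
  have nzB: "(\<Prod>i<k. fact (k+i) :: complex) \<noteq> 0"
    by (simp only: prod_zero_iff[OF finite_lessThan] fact_nonzero) blast
  have "FU (Suc k) = ((\<Prod>i<k. fact i) * fact k) / ((\<Prod>i<k. fact (Suc k + i)) * fact (Suc k + k))"
    unfolding FU_def prod_dividef by (simp only: prod.lessThan_Suc)
  also have "\<dots> = ((\<Prod>i<k. fact i) * fact k) / (((\<Prod>i<k. fact (k+i)) * fact (2*k) / fact k) * fact (2*k+1))"
    unfolding e ek ..
  also have "\<dots> = FU k * (fact k / fact (2*k)) * (fact k / fact (2*k+1))"
    unfolding FU_def prod_dividef by (rule algFU[OF nzB nzk fact_nonzero fact_nonzero])
  finally show ?thesis .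
qed

lemma FU_pow: "FU k * 2^(k^2 - k) = (\<Prod>j<k. 1 / (of_nat (dfact (2*j-1)) * of_nat (dfact (2*j+1))))"
proof (induction k)
  case 0 then show ?case by (simp add: FU_def)
next
  case (Suc k)
  have e: "Suc k ^ 2 - Suc k = (k^2 - k) + k + k" by (simp add: power2_eq_square)
  have "FU (Suc k) * 2^(Suc k ^ 2 - Suc k) = (FU k * 2^(k^2-k)) * ((fact k / fact (2*k) * 2^k) * (fact k / fact (2*k+1) * 2^k))"
    unfolding FU_Suc e power_add by (simp only: mult_ac)
  also have "\<dots> = (\<Prod>j<k. 1 / (of_nat (dfact (2*j-1)) * of_nat (dfact (2*j+1)))) * (1 / (of_nat (dfact (2*k-1)) * of_nat (dfact (2*k+1))))"
    unfolding Suc D1c D2c by simp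
  finally show ?case by simp
qed

lemma CU2: "k > 0 \<Longrightarrow> FU k = (2::complex) powi (int k - int k ^ 2) *
       (\<Prod>j=1..k-1. 1 / (of_nat (dfact (2*j-1)) * of_nat (dfact (2*j+1))))"
proof -
  assume k: "k > 0"
  have le: "k \<le> k^2" by (simp add: power2_eq_square)
  have i: "int k - int k ^ 2 = - int (k^2 - k)" using le by (simp add: of_nat_diff)
  have p: "(\<Prod>j=1..k-1. 1 / (of_nat (dfact (2*j-1)) * of_nat (dfact (2*j+1))) :: complex)
      = (\<Prod>j<k. 1 / (of_nat (dfact (2*j-1)) * of_nat (dfact (2*j+1))))"
    using k by (subst prod_shift1) simp_all
  show ?thesis unfolding i p FU_pow[symmetric] by (simp add: power_int_minus)
qed



lemma limU: "seq_U (of_nat k) \<longlonglongrightarrow> FU k"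
proof -
  have "(\<lambda>N. \<Prod>i<k. fact i / fact (k+i) * (pochhammer (of_nat N + (of_nat i + 1)) k / of_nat N ^ k))
      \<longlonglongrightarrow> (\<Prod>i<k. fact i / fact (k+i) * (1::complex))"
    by (intro tendsto_prod tendsto_mult tendsto_const LP)
  moreover have "\<forall>\<^sub>F N in sequentially. (\<Prod>i<k. fact i / fact (k+i) * (pochhammer (of_nat N + (of_nat i + 1)) k / of_nat N ^ k)) = seq_U (of_nat k) N"
    using eventually_ge_at_top[of 1] by eventually_elim (simp add: seqU_eq)
  ultimately show ?thesis unfolding FU_def by (simp add: Lim_transform_eventually)
qed

lemma limSp: "seq_Sp (of_nat k) \<longlonglongrightarrow> (\<Prod>i<k. (fact i / fact (2*i+1) * 2^i :: complex))"
proof -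
  have "(\<lambda>N. \<Prod>i<k. (fact i / fact (2*i+1) * 2^i) *
     (pochhammer (of_nat N + (of_nat i + 1)) 1 / of_nat N ^ 1) *
     (pochhammer (2 * of_nat N + (of_nat i + 2)) i / (2 * of_nat N) ^ i))
      \<longlonglongrightarrow> (\<Prod>i<k. (fact i / fact (2*i+1) * 2^i :: complex) * 1 * 1)"
    by (intro tendsto_prod tendsto_mult tendsto_const LP LP2)
  moreover have "\<forall>\<^sub>F N in sequentially. (\<Prod>i<k. (fact i / fact (2*i+1) * 2^i) *
     (pochhammer (of_nat N + (of_nat i + 1)) 1 / of_nat N ^ 1) *
     (pochhammer (2 * of_nat N + (of_nat i + 2)) i / (2 * of_nat N) ^ i)) = seq_Sp (of_nat k) N"
    using eventually_ge_at_top[of 1] by eventually_elim (simp only: seqSp_eq)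
  ultimately show ?thesis by (simp add: Lim_transform_eventually)
qed

lemma limO: "seq_O (of_nat k) \<longlonglongrightarrow> (\<Prod>i<k. (fact i / fact (2*i) * 2^(i+1) :: complex))"
proof -
  have "(\<lambda>N. \<Prod>i<k. (fact i / fact (2*i) * 2^(i+1)) *
     (pochhammer (2 * of_nat N + of_nat i) (i+1) / (2 * of_nat N) ^ (i+1)) /
     (pochhammer (of_nat N + of_nat i) 1 / of_nat N ^ 1))
      \<longlonglongrightarrow> (\<Prod>i<k. (fact i / fact (2*i) * 2^(i+1) :: complex) * 1 / 1)"
    by (intro tendsto_prod tendsto_mult tendsto_divide tendsto_const LP LP2) simp
  moreover have "\<forall>\<^sub>F N in sequentially. (\<Prod>i<k. (fact i / fact (2*i) * 2^(i+1)) *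
     (pochhammer (2 * of_nat N + of_nat i) (i+1) / (2 * of_nat N) ^ (i+1)) /
     (pochhammer (of_nat N + of_nat i) 1 / of_nat N ^ 1)) = seq_O (of_nat k) N"
    using eventually_ge_at_top[of 1] by eventually_elim (simp only: seqO_eq)
  ultimately show ?thesis by (simp add: Lim_transform_eventually)
qed

lemma Gfact: "Gamma (1 + of_nat n :: complex) = of_nat (fact n)"
  by (simp add: Gamma_fact)

theorem lemma5p2:
  fixes k :: nat
  assumes "k > 0"
  shows "convergent (seq_U (of_nat k)) \<and> convergent (seq_O (of_nat k)) \<and>
         convergent (seq_Sp (of_nat k)) \<and>
    g_U (of_nat k) = of_nat (fact (k ^ 2)) *
       ((\<Prod>j=1..k-1. of_nat (fact j))^2 / (\<Prod>j=1..2*k-1. of_nat (fact j))) \<and>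
    g_U (of_nat k) = of_nat (fact (k ^ 2)) * (2::complex) powi (int k - int k ^ 2) *
       (\<Prod>j=1..k-1. 1 / (of_nat (dfact (2*j-1)) * of_nat (dfact (2*j+1)))) \<and>
    g_O (of_nat k) = of_nat (fact (k * (k - 1) div 2)) * 2 ^ (k * (k - 1) div 2 + k - 1) *
       (\<Prod>j=1..k-1. of_nat (fact j) / of_nat (fact (2*j))) \<and>
    g_O (of_nat k) = of_nat (fact (k * (k - 1) div 2)) * 2 ^ (k - 1) *
       (\<Prod>j=1..k-1. 1 / of_nat (dfact (2*j-1))) \<and>
    g_Sp (of_nat k) = of_nat (fact (k * (k + 1) div 2)) * 2 ^ (k * (k + 1) div 2) *
       (\<Prod>j=1..k. of_nat (fact j) / of_nat (fact (2*j))) \<and>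
    g_Sp (of_nat k) = of_nat (fact (k * (k + 1) div 2)) *
       (\<Prod>j=1..k. 1 / of_nat (dfact (2*j-1)))"
proof -
  have cU: "convergent (seq_U (of_nat k))" using limU by (auto simp: convergent_def)
  have cO: "convergent (seq_O (of_nat k))" using limO by (auto simp: convergent_def)
  have cS: "convergent (seq_Sp (of_nat k))" using limSp by (auto simp: convergent_def)
  have GU: "G_U (of_nat k) = FU k" unfolding G_U_def using limU by (rule limI)
  have GO: "G_O (of_nat k) = 1/2 * (\<Prod>i<k. (fact i / fact (2*i) * 2^(i+1) :: complex))"
    unfolding G_O_def using limO by (simp add: limI)
  have GS: "G_Sp (of_nat k) = (\<Prod>i<k. (fact i / fact (2*i+1) * 2^i :: complex))"
    unfolding G_Sp_def using limSp by (rule limI)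
  have BU: "Gamma (1 + B_U (of_nat k)) = of_nat (fact (k^2))"
    unfolding B_U_def using Gfact[of "k^2"] by simp
  have BO: "Gamma (1 + B_O (of_nat k)) = of_nat (fact (k * (k - 1) div 2))"
    unfolding B_O_def exp0 sum0' by (rule Gfact)
  have BS: "Gamma (1 + B_Sp (of_nat k)) = of_nat (fact (k * (k + 1) div 2))"
    unfolding B_Sp_def exp1 sum1' by (rule Gfact)
  have U1: "g_U (of_nat k) = of_nat (fact (k ^ 2)) *
       ((\<Prod>j=1..k-1. of_nat (fact j))^2 / (\<Prod>j=1..2*k-1. of_nat (fact j)))"
    unfolding g_U_def BU GU FU_def CU1[OF assms] ..
  have U2: "g_U (of_nat k) = of_nat (fact (k ^ 2)) * (2::complex) powi (int k - int k ^ 2) *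
       (\<Prod>j=1..k-1. 1 / (of_nat (dfact (2*j-1)) * of_nat (dfact (2*j+1))))"
    unfolding g_U_def BU GU CU2[OF assms] by (simp only: mult_ac)
  have O2: "g_O (of_nat k) = of_nat (fact (k * (k - 1) div 2)) * 2 ^ (k - 1) *
       (\<Prod>j=1..k-1. 1 / of_nat (dfact (2*j-1)))"
    unfolding g_O_def BO GO CO2[OF assms] by (simp only: mult_ac)
  have O1: "g_O (of_nat k) = of_nat (fact (k * (k - 1) div 2)) * 2 ^ (k * (k - 1) div 2 + k - 1) *
       (\<Prod>j=1..k-1. of_nat (fact j) / of_nat (fact (2*j)))"
    unfolding O2 using CO1[OF assms] by (simp only: mult.assoc)
  have S1: "g_Sp (of_nat k) = of_nat (fact (k * (k + 1) div 2)) * 2 ^ (k * (k + 1) div 2) *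
       (\<Prod>j=1..k. of_nat (fact j) / of_nat (fact (2*j)))"
    unfolding g_Sp_def BS GS CS1 by (simp only: mult.assoc)
  have S2: "g_Sp (of_nat k) = of_nat (fact (k * (k + 1) div 2)) *
       (\<Prod>j=1..k. 1 / of_nat (dfact (2*j-1)))"
    unfolding g_Sp_def BS GS CS2 ..
  show ?thesis using cU cO cS U1 U2 O1 O2 S1 S2 by blast
qed

end
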